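(* For every $n\ge1$, $$M_n=U_n\cup\bigcup_{j\ge n}\big((\bar\beta_j-n)+M_0\big).$$
   Context: $K$ is an algebraically closed field, $A=K[x,y]_{(x,y)}$. Set $\bar\beta_0=1$, $\bar\beta_{i+1}=2\bar\beta_i+2^{-(i+1)}$, i.e. $\bar\beta_i=\frac13(2^{i+2}-2^{-i})$. Let $P_0=x$, $P_1=y$, $P_{i+1}=P_i^2-P_0^{2^{i+1}}P_{i-1}$ ($i\ge1$). Let $\bar\nu$ be the valuation of $K(x,y)$ dominating $A$ for which $P_0,P_1,P_2,\dots$ is a (minimal) generating sequence with $\bar\nu(P_i)=\bar\beta_i$; its value group is $\bigcup_{i\ge0}2^{-i}\mathbb Z$ and its semigroup on $A$ is $M_0=\bar\nu(A\setminus\{0\})=\sum_{i\ge0}\mathbb N\bar\beta_i$. Let $z=y/x$, $W_n=\{a_0+a_1z+\cdots+a_nz^n\mid a_j\in K[x,y]\}$, $M_n=\{\bar\nu(f)\mid 0\ne f\in W_n\}$ (an $M_0$-module), and $U_n=\{\lambda\in M_n\mid \lambda=\sum_{j=0}^{n-1}l_j\bar\beta_j$ for some $l_j\in\mathbb Z\}$. *)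

theory Defs
  imports "HOL-Computational_Algebra.Polynomial" "HOL-Computational_Algebra.Fraction_Field"
begin

text \<open>K[x,y] is modelled as 'k poly poly: the outer variable is y, the inner one is x.
  K(x,y) is the fraction field ('k poly poly) fract.\<close>

definition emb :: "'k::field poly poly \<Rightarrow> 'k poly poly fract" where
  "emb p = Fract p 1"

definition varX :: "'k::field poly poly" where "varX = [:[:0, 1:]:]"
definition varY :: "'k::field poly poly" where "varY = [:0, 1:]"

definition at_origin :: "'k::field poly poly \<Rightarrow> 'k" where
  "at_origin p = poly (poly p 0) 0"

text \<open>The local ring A = K[x,y]_(x,y) inside K(x,y), and its maximal ideal.\<close>
definition locA :: "'k::field poly poly fract set" where
  "locA = {Fract a b | a b. at_origin b \<noteq> 0}"

definition maxA :: "'k::field poly poly fract set" where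
  "maxA = {Fract a b | a b. at_origin b \<noteq> 0 \<and> at_origin a = 0}"

text \<open>v is a (rational-valued) valuation of K(x,y) dominating A (value of 0 is irrelevant).\<close>
definition valuation_dominating :: "('k::field poly poly fract \<Rightarrow> rat) \<Rightarrow> bool" where
  "valuation_dominating v \<longleftrightarrow>
     (\<forall>f g. f \<noteq> 0 \<longrightarrow> g \<noteq> 0 \<longrightarrow> v (f * g) = v f + v g) \<and>
     (\<forall>f g. f \<noteq> 0 \<longrightarrow> g \<noteq> 0 \<longrightarrow> f + g \<noteq> 0 \<longrightarrow> v (f + g) \<ge> min (v f) (v g)) \<and>
     (\<forall>f\<in>locA. f \<noteq> 0 \<longrightarrow> v f \<ge> 0) \<and>
     (\<forall>f\<in>maxA. f \<noteq> 0 \<longrightarrow> v f > 0)"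

definition bbeta :: "nat \<Rightarrow> rat" where
  "bbeta i = (2 ^ (i + 2) - inverse (2 ^ i)) / 3"

fun Pseq :: "nat \<Rightarrow> 'k::field poly poly" where
  "Pseq 0 = varX"
| "Pseq (Suc 0) = varY"
| "Pseq (Suc (Suc i)) = (Pseq (Suc i))^2 - varX ^ (2 ^ (Suc (Suc i))) * Pseq i"

definition Pmon :: "nat list \<Rightarrow> 'k::field poly poly fract" where
  "Pmon a = (\<Prod>i<length a. emb (Pseq i) ^ (a ! i))"

definition mon_val :: "nat list \<Rightarrow> rat" where
  "mon_val a = (\<Sum>i<length a. of_nat (a ! i) * bbeta i)"

definition ideal_genA :: "'k::field poly poly fract set \<Rightarrow> 'k poly poly fract set" where
  "ideal_genA G = {\<Sum>g\<in>S. c g * g | S c. finite S \<and> S \<subseteq> G \<and> c ` S \<subseteq> locA}"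

definition generating_sequence :: "('k::field poly poly fract \<Rightarrow> rat) \<Rightarrow> bool" where
  "generating_sequence v \<longleftrightarrow>
     (\<forall>\<gamma>::rat. {f \<in> locA. f = 0 \<or> v f \<ge> \<gamma>} = ideal_genA {Pmon a | a. mon_val a \<ge> \<gamma>})"

definition is_bar_nu :: "('k::field poly poly fract \<Rightarrow> rat) \<Rightarrow> bool" where
  "is_bar_nu v \<longleftrightarrow> valuation_dominating v \<and> (\<forall>i. v (emb (Pseq i)) = bbeta i) \<and> generating_sequence v"

definition zvar :: "'k::field poly poly fract" where
  "zvar = emb varY / emb varX"

definition Wn :: "nat \<Rightarrow> 'k::field poly poly fract set" where
  "Wn n = {\<Sum>j\<le>n. emb (a j) * zvar ^ j | a. True}"

definition Mn :: "('k::field poly poly fract \<Rightarrow> rat) \<Rightarrow> nat \<Rightarrow> rat set" where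
  "Mn v n = {v f | f. f \<in> Wn n \<and> f \<noteq> 0}"

definition M0 :: "('k::field poly poly fract \<Rightarrow> rat) \<Rightarrow> rat set" where
  "M0 v = {v f | f. f \<in> locA \<and> f \<noteq> 0}"

definition Useg :: "('k::field poly poly fract \<Rightarrow> rat) \<Rightarrow> nat \<Rightarrow> rat set" where
  "Useg v n = {lam \<in> Mn v n. \<exists>l::nat \<Rightarrow> int. lam = (\<Sum>j<n. of_int (l j) * bbeta j)}"

end

theory Submission imports Defs begin

lemma emb_0[simp]: "emb 0 = 0" by (simp add: emb_def fract_collapse)
lemma emb_1[simp]: "emb 1 = 1" by (simp add: emb_def fract_collapse)
lemma emb_add: "emb (p + q) = emb p + emb q" by (simp add: emb_def)
lemma emb_mult: "emb (p * q) = emb p * emb q" by (simp add: emb_def)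

lemma emb_sum: "emb (sum f A) = (\<Sum>x\<in>A. emb (f x))"
  by (induction A rule: infinite_finite_induct) (simp_all add: emb_add)
lemma emb_prod: "emb (prod f A) = (\<Prod>x\<in>A. emb (f x))"
  by (induction A rule: infinite_finite_induct) (simp_all add: emb_mult)
lemma emb_power: "emb (p ^ k) = emb p ^ k"
  by (induction k) (simp_all add: emb_mult)
lemma emb_minus: "emb (- p) = - emb p"
  by (simp add: emb_def)

lemma emb_eq_0_iff[simp]: "emb p = 0 \<longleftrightarrow> p = 0"
  by (simp add: emb_def Zero_fract_def eq_fract)

lemma Fract_emb: "b \<noteq> 0 \<Longrightarrow> Fract a b = emb a / emb b"
  by (simp add: emb_def divide_fract_def)

lemma varX_ne0[simp]: "varX \<noteq> 0" by (simp add: varX_def)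

lemma at_origin_1[simp]: "at_origin 1 = 1" by (simp add: at_origin_def)
lemma at_origin_0[simp]: "at_origin 0 = 0" by (simp add: at_origin_def)

lemma emb_locA: "emb p \<in> locA"
  unfolding locA_def emb_def by force

lemma Pseq_deg: "i \<ge> 1 \<Longrightarrow> degree (Pseq i :: 'a::field poly poly) = 2^(i-1) \<and> lead_coeff (Pseq i :: 'a poly poly) = 1"
proof (induction i rule: less_induct)
  case (less i)
  show ?case
  proof (cases i)
    case 0 then show ?thesis using less by simp
  next
    case (Suc k)
    show ?thesis
    proof (cases k)
      case 0 then show ?thesis using Suc by (simp add: varY_def)
    next
      case (Suc j)
      have ih: "degree (Pseq (Suc j) :: 'a poly poly) = 2^j \<and> lead_coeff (Pseq (Suc j) :: 'a poly poly) = 1"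
      proof -
        have a: "Suc j < i" "1 \<le> Suc j" using \<open>i = Suc k\<close> Suc by simp_all
        show ?thesis using less.IH[OF a] by (metis diff_Suc_1)
      qed
      define p where "p = (Pseq (Suc j) :: 'a poly poly) ^ 2"
      define q where "q = varX ^ (2 ^ (Suc (Suc j))) * (Pseq j :: 'a poly poly)"
      have p0: "(Pseq (Suc j) :: 'a poly poly) \<noteq> 0" using ih by auto
      have dp: "degree p = 2^(Suc j)" using ih p0 unfolding p_def
        by (simp add: degree_power_eq)
      have lp: "lead_coeff p = 1" using ih unfolding p_def by (metis lead_coeff_power power_one)
      have dvx: "degree (varX ^ m :: 'a poly poly) = 0" for m
        by (simp add: varX_def degree_power_eq)
      have "degree q \<le> degree (Pseq j :: 'a poly poly)" unfolding q_def
        using degree_mult_le[of "varX ^ (2 ^ (Suc (Suc j)))" "Pseq j"] dvx by (metis add_0)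
      moreover have "degree (Pseq j :: 'a poly poly) < 2^(Suc j)"
      proof (cases j)
        case 0 then show ?thesis by (simp add: varX_def)
      next
        case (Suc l)
        then have "degree (Pseq j :: 'a poly poly) = 2^l" using less.IH[of j] \<open>i = Suc k\<close> \<open>k = Suc j\<close> by simp
        then show ?thesis using Suc by simp
      qed
      ultimately have dq: "degree (-q) < degree p" using dp by simp
      have "(Pseq i :: 'a poly poly) = p + (-q)" using \<open>i = Suc k\<close> Suc by (simp add: p_def q_def)
      moreover have d: "degree (p + -q) = degree p" by (rule degree_add_eq_left[OF dq])
      moreover have l: "lead_coeff (-q + p) = lead_coeff p" by (rule lead_coeff_add_le[OF dq])
      ultimately show ?thesis using dp lp \<open>i = Suc k\<close> Suc
        by (metis add.commute diff_Suc_1 power_Suc)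
    qed
  qed
qed

lemma Pseq_ne0: "(Pseq i :: 'a::field poly poly) \<noteq> 0"
proof (cases i)
  case 0 then show ?thesis by simp
next
  case (Suc k) then show ?thesis using Pseq_deg[of i, where 'a='a] by auto
qed


inductive inI :: "nat \<Rightarrow> 'a::field poly poly \<Rightarrow> bool" where
  I0: "inI 0 p"
| Iadd: "inI n p \<Longrightarrow> inI n q \<Longrightarrow> inI n (p + q)"
| Imul: "inI n p \<Longrightarrow> inI n (c * p)"
| Ix: "inI n p \<Longrightarrow> inI (Suc n) (varX * p)"
| Iy: "inI n p \<Longrightarrow> inI (Suc n) (varY * p)"

lemma inI_down_aux: "inI m p \<Longrightarrow> m = Suc n \<Longrightarrow> inI n p"
proof (induction arbitrary: n rule: inI.induct)
  case (I0 p) then show ?case by simp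
next
  case (Iadd m p q) then show ?case by (simp add: inI.Iadd)
next
  case (Imul m p c) then show ?case by (simp add: inI.Imul)
next
  case (Ix k q)
  then have kn: "k = n" by simp
  show ?case
  proof (cases k)
    case 0 then show ?thesis using kn by (simp add: inI.I0)
  next
    case (Suc k') then show ?thesis using kn Ix.IH inI.Ix by blast
  qed
next
  case (Iy k q)
  then have kn: "k = n" by simp
  show ?case
  proof (cases k)
    case 0 then show ?thesis using kn by (simp add: inI.I0)
  next
    case (Suc k') then show ?thesis using kn Iy.IH inI.Iy by blast
  qed
qed

lemma inI_mono: "inI (n + k) p \<Longrightarrow> inI n p"
  by (induction k) (auto dest: inI_down_aux)

lemma inI_mult: "inI a p \<Longrightarrow> inI b q \<Longrightarrow> inI (a + b) (p * q)"
proof (induction arbitrary: q rule: inI.induct)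
  case (I0 p) then show ?case by (simp add: inI.Imul)
next
  case (Iadd n p1 p2) then show ?case by (simp add: distrib_right inI.Iadd)
next
  case (Imul n p c) then show ?case by (metis inI.Imul mult.assoc)
next
  case (Ix n p) then show ?case by (metis add_Suc inI.Ix mult.assoc)
next
  case (Iy n p) then show ?case by (metis add_Suc inI.Iy mult.assoc)
qed

lemma inI_varX_pow: "inI k (varX ^ k)"
  by (induction k) (auto intro: inI.I0 inI.Ix)

lemma inI_Pseq: "inI j (Pseq j :: 'a::field poly poly)"
proof (induction j rule: less_induct)
  case (less j)
  show ?case
  proof (cases j)
    case 0 then show ?thesis by (simp add: inI.I0)
  next
    case (Suc k)
    show ?thesis
    proof (cases k)
      case 0 then show ?thesis using Suc inI.Iy[OF inI.I0[of 1]] by simp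
    next
      case (Suc i)
      have a: "inI (Suc i) (Pseq (Suc i) :: 'a poly poly)" using less.IH \<open>j = Suc k\<close> Suc by simp
      have b: "inI i (Pseq i :: 'a poly poly)" using less.IH \<open>j = Suc k\<close> Suc by simp
      have "inI (Suc i + Suc i) ((Pseq (Suc i) :: 'a poly poly) * Pseq (Suc i))" by (rule inI_mult[OF a a])
      then have c: "inI (Suc (Suc i)) ((Pseq (Suc i) :: 'a poly poly)^2)"
        using inI_mono[of "Suc (Suc i)" i] by (simp add: power2_eq_square)
      have X: "inI (2 ^ Suc (Suc i) + i) (varX ^ (2 ^ Suc (Suc i)) * (Pseq i :: 'a poly poly))"
        by (rule inI_mult[OF inI_varX_pow b])
      have "(2::nat) \<le> 2 ^ Suc (Suc i)" by simp
      then have E: "2 ^ Suc (Suc i) + i = Suc (Suc i) + (2 ^ Suc (Suc i) - 2)" by linarith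
      have d: "inI (Suc (Suc i)) (varX ^ (2 ^ Suc (Suc i)) * (Pseq i :: 'a poly poly))"
        by (rule inI_mono, subst E[symmetric], rule X)
      have "inI (Suc (Suc i)) ((Pseq (Suc i) :: 'a poly poly)^2 + (-1) * (varX ^ (2 ^ Suc (Suc i)) * Pseq i))"
        by (rule inI.Iadd[OF c inI.Imul[OF d]])
      then show ?thesis using \<open>j = Suc k\<close> Suc by simp
    qed
  qed
qed

lemma Wn_intro: "f = (\<Sum>j\<le>n. emb (a j) * zvar ^ j) \<Longrightarrow> f \<in> Wn n"
  unfolding Wn_def by auto

lemma Wn_add: "f \<in> Wn n \<Longrightarrow> g \<in> Wn n \<Longrightarrow> f + g \<in> Wn n"
proof -
  assume "f \<in> Wn n" "g \<in> Wn n"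
  then obtain a b where "f = (\<Sum>j\<le>n. emb (a j) * zvar ^ j)" "g = (\<Sum>j\<le>n. emb (b j) * zvar ^ j)"
    unfolding Wn_def by auto
  then have "f + g = (\<Sum>j\<le>n. emb (a j + b j) * zvar ^ j)"
    by (simp add: emb_add sum.distrib distrib_right)
  then show ?thesis by (rule Wn_intro)
qed

lemma Wn_mul: "f \<in> Wn n \<Longrightarrow> emb c * f \<in> Wn n"
proof -
  assume "f \<in> Wn n"
  then obtain a where "f = (\<Sum>j\<le>n. emb (a j) * zvar ^ j)"
    unfolding Wn_def by auto
  then have "emb c * f = (\<Sum>j\<le>n. emb (c * a j) * zvar ^ j)"
    by (simp add: emb_mult sum_distrib_left mult.assoc)
  then show ?thesis by (rule Wn_intro)
qed

lemma Wn_Suc: "f \<in> Wn n \<Longrightarrow> f \<in> Wn (Suc n)"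
proof -
  assume "f \<in> Wn n"
  then obtain a where fa: "f = (\<Sum>j\<le>n. emb (a j) * zvar ^ j)"
    unfolding Wn_def by auto
  have "f = (\<Sum>j\<le>Suc n. emb ((a(Suc n := 0)) j) * zvar ^ j)"
    using fa by (simp add: sum.atMost_Suc)
  then show ?thesis by (rule Wn_intro)
qed

lemma Wn_z: "f \<in> Wn n \<Longrightarrow> zvar * f \<in> Wn (Suc n)"
proof -
  assume "f \<in> Wn n"
  then obtain a where fa: "f = (\<Sum>j\<le>n. emb (a j) * zvar ^ j)"
    unfolding Wn_def by auto
  define b where "b j = (case j of 0 \<Rightarrow> 0 | Suc k \<Rightarrow> a k)" for j
  have "(\<Sum>j\<le>Suc n. emb (b j) * zvar ^ j) = emb (b 0) * zvar^0 + (\<Sum>j\<le>n. emb (b (Suc j)) * zvar ^ Suc j)"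
    by (rule sum.atMost_Suc_shift)
  also have "\<dots> = zvar * f" using fa by (simp add: b_def sum_distrib_left mult_ac)
  finally have "zvar * f = (\<Sum>j\<le>Suc n. emb (b j) * zvar ^ j)" by simp
  then show ?thesis by (rule Wn_intro)
qed

lemma inI_Wn: "inI n p \<Longrightarrow> emb p * inverse (emb varX) ^ n \<in> Wn n"
proof (induction rule: inI.induct)
  case (I0 p)
  have "emb p = (\<Sum>j\<le>0. emb ((\<lambda>_. p) j) * zvar ^ j)" by simp
  then show ?case unfolding Wn_def by auto
next
  case (Iadd n p q) then show ?case by (metis Wn_add distrib_right emb_add)
next
  case (Imul n p c) then show ?case by (metis Wn_mul emb_mult mult.assoc)
next
  case (Ix n p)
  have "emb (varX * p) * inverse (emb varX) ^ Suc n = emb p * inverse (emb varX) ^ n"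
    by (simp add: emb_mult)
  then show ?case using Ix Wn_Suc by metis
next
  case (Iy n p)
  have "emb (varY * p) * inverse (emb varX) ^ Suc n = zvar * (emb p * inverse (emb varX) ^ n)"
    by (simp add: emb_mult zvar_def divide_inverse mult_ac)
  then show ?case using Iy Wn_z by metis
qed

lemma Wn_poly: "f \<in> Wn n \<Longrightarrow> \<exists>F. f * emb varX ^ n = emb F"
proof -
  assume "f \<in> Wn n"
  then obtain a where fa: "f = (\<Sum>j\<le>n. emb (a j) * zvar ^ j)"
    unfolding Wn_def by auto
  have X0: "emb varX \<noteq> 0" by simp
  have t: "zvar ^ j * emb varX ^ n = emb varY ^ j * emb varX ^ (n - j)" if "j \<le> n" for j
  proof -
    have eq: "emb varX ^ n = emb varX ^ j * emb varX ^ (n - j)"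
      using that by (simp add: power_add[symmetric])
    have "zvar ^ j * emb varX ^ n = (emb varY ^ j / emb varX ^ j) * (emb varX ^ j * emb varX ^ (n - j))"
      by (simp only: zvar_def power_divide eq)
    also have "\<dots> = emb varY ^ j * emb varX ^ (n - j)" using X0 by simp
    finally show ?thesis .
  qed
  have "f * emb varX ^ n = (\<Sum>j\<le>n. emb (a j) * (zvar ^ j * emb varX ^ n))"
    using fa by (simp add: sum_distrib_right mult.assoc)
  also have "\<dots> = (\<Sum>j\<le>n. emb (a j * varY ^ j * varX ^ (n - j)))"
    by (rule sum.cong) (simp_all add: t emb_mult emb_power mult.assoc)
  also have "\<dots> = emb (\<Sum>j\<le>n. a j * varY ^ j * varX ^ (n - j))" by (simp add: emb_sum)
  finally show ?thesis by blast
qed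


lemma bbeta0: "bbeta 0 = 1" by (simp add: bbeta_def)

lemma mon_val_dec:
  assumes "j < length a" "a ! j \<ge> 1"
  shows "mon_val a = bbeta j + mon_val (a[j := a ! j - 1])"
proof -
  have "mon_val a = (\<Sum>i<length a. of_nat ((a[j := a ! j - 1]) ! i) * bbeta i + (if i = j then bbeta j else 0))"
    unfolding mon_val_def
  proof (rule sum.cong)
    fix i assume "i \<in> {..<length a}"
    show "of_nat (a ! i) * bbeta i = of_nat ((a[j := a ! j - 1]) ! i) * bbeta i + (if i = j then bbeta j else 0)"
      using assms by (cases "i = j") (auto simp: of_nat_diff algebra_simps)
  qed simp
  also have "\<dots> = mon_val (a[j := a ! j - 1]) + bbeta j"
    unfolding mon_val_def using assms by (simp add: sum.distrib)
  finally show ?thesis by simp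
qed

lemma mon_val_low:
  assumes "\<forall>i<length a. n \<le> i \<longrightarrow> a ! i = 0"
  shows "mon_val a = (\<Sum>i<n. of_nat (if i < length a then a ! i else 0) * bbeta i)"
proof -
  define g where "g i = of_nat (if i < length a then a ! i else 0) * bbeta i" for i
  have "mon_val a = (\<Sum>i<length a. g i)" unfolding mon_val_def g_def by simp
  also have "\<dots> = (\<Sum>i<max (length a) n. g i)"
    by (rule sum.mono_neutral_left) (auto simp: g_def)
  also have "\<dots> = (\<Sum>i<n. g i)"
    by (rule sum.mono_neutral_right) (use assms in \<open>auto simp: g_def\<close>)
  finally show ?thesis unfolding g_def .
qed

context
  fixes v :: "'k::field poly poly fract \<Rightarrow> rat"
  assumes vd: "valuation_dominating v"
begin

lemma v_mult: "f \<noteq> 0 \<Longrightarrow> g \<noteq> 0 \<Longrightarrow> v (f * g) = v f + v g"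
  using vd unfolding valuation_dominating_def by blast

lemma v_add: "f \<noteq> 0 \<Longrightarrow> g \<noteq> 0 \<Longrightarrow> f + g \<noteq> 0 \<Longrightarrow> v (f + g) \<ge> min (v f) (v g)"
  using vd unfolding valuation_dominating_def by blast

lemma v_loc: "f \<in> locA \<Longrightarrow> f \<noteq> 0 \<Longrightarrow> v f \<ge> 0"
  using vd unfolding valuation_dominating_def by blast

lemma v_one: "v 1 = 0"
  using v_mult[of 1 1] by simp

lemma v_inv: "h \<noteq> 0 \<Longrightarrow> v (inverse h) = - v h"
  using v_mult[of h "inverse h"] v_one by simp

lemma v_pow: "h \<noteq> 0 \<Longrightarrow> v (h ^ k) = of_nat k * v h"
  by (induction k) (simp_all add: v_one v_mult algebra_simps)

lemma v_prod: "finite I \<Longrightarrow> (\<forall>i\<in>I. f i \<noteq> 0) \<Longrightarrow> v (prod f I) = (\<Sum>i\<in>I. v (f i))"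
  by (induction I rule: finite_induct) (simp_all add: v_one v_mult)

lemma v_unit: assumes "at_origin b \<noteq> 0" shows "v (emb b) = 0"
proof -
  have b0: "b \<noteq> 0" using assms by auto
  have "inverse (emb b) = Fract 1 b" by (simp add: emb_def)
  then have "inverse (emb b) \<in> locA" unfolding locA_def using assms by blast
  then have "v (inverse (emb b)) \<ge> 0" using v_loc b0 by simp
  moreover have "v (emb b) \<ge> 0" using v_loc[OF emb_locA] b0 by simp
  ultimately show ?thesis using v_inv[of "emb b"] b0 by simp
qed

lemma v_sum_gt: "finite S \<Longrightarrow> (\<forall>g\<in>S. t g = 0 \<or> v (t g) > \<gamma>) \<Longrightarrow> sum t S = 0 \<or> v (sum t S) > \<gamma>"
proof (induction S rule: finite_induct)
  case empty then show ?case by simp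
next
  case (insert x F)
  then have h1: "t x = 0 \<or> v (t x) > \<gamma>" and h2: "sum t F = 0 \<or> v (sum t F) > \<gamma>" by auto
  have "t x + sum t F = 0 \<or> v (t x + sum t F) > \<gamma>"
  proof (cases "t x = 0 \<or> sum t F = 0")
    case True then show ?thesis using h1 h2 by auto
  next
    case False
    show ?thesis
    proof (cases "t x + sum t F = 0")
      case False
      then have "v (t x + sum t F) \<ge> min (v (t x)) (v (sum t F))"
        using \<open>\<not> (t x = 0 \<or> sum t F = 0)\<close> v_add by blast
      then show ?thesis using h1 h2 \<open>\<not> (t x = 0 \<or> sum t F = 0)\<close> by auto
    qed simp
  qed
  then show ?case using insert by simp
qed

end

lemma Pmon_emb: "Pmon a = emb (\<Prod>i<length a. Pseq i ^ (a ! i))"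
  unfolding Pmon_def by (simp add: emb_prod emb_power)

lemma Pmon_ne0: "(Pmon a :: 'a::field poly poly fract) \<noteq> 0"
  unfolding Pmon_def using Pseq_ne0[where 'a='a] by (simp add: prod_zero_iff)

lemma Pmon_locA: "Pmon a \<in> locA"
  unfolding Pmon_emb by (rule emb_locA)

context
  fixes v :: "'k::field poly poly fract \<Rightarrow> rat"
  assumes bn: "is_bar_nu v"
begin

lemma vd: "valuation_dominating v" using bn unfolding is_bar_nu_def by blast

lemma v_P: "v (emb (Pseq i)) = bbeta i" using bn unfolding is_bar_nu_def by blast

lemma v_Pmon: "v (Pmon a) = mon_val a"
proof -
  have "v (Pmon a) = (\<Sum>i<length a. v (emb (Pseq i) ^ (a ! i)))"
    unfolding Pmon_def by (rule v_prod[OF vd]) (simp_all add: Pseq_ne0)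
  also have "\<dots> = mon_val a"
    unfolding mon_val_def by (rule sum.cong) (simp_all add: v_pow[OF vd] Pseq_ne0 v_P)
  finally show ?thesis .
qed

lemma mon_val_M0: "mon_val a \<in> M0 v"
  unfolding M0_def using v_Pmon[of a] Pmon_locA[of a] Pmon_ne0[of a] by force

lemma val_mon:
  assumes "h \<in> locA" "h \<noteq> 0"
  shows "\<exists>a. v h = mon_val a"
proof (rule ccontr)
  assume na: "\<not> (\<exists>a. v h = mon_val a)"
  define \<gamma> where "\<gamma> = v h"
  have "h \<in> {f \<in> locA. f = 0 \<or> v f \<ge> \<gamma>}" using assms \<gamma>_def by simp
  then have "h \<in> ideal_genA {Pmon a | a. mon_val a \<ge> \<gamma>}"
    using bn unfolding is_bar_nu_def generating_sequence_def by blast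
  then obtain S c where S: "h = (\<Sum>g\<in>S. c g * g)" "finite S" "S \<subseteq> {Pmon a | a. mon_val a \<ge> \<gamma>}"
    "c ` S \<subseteq> locA" unfolding ideal_genA_def by blast
  have "\<forall>g\<in>S. c g * g = 0 \<or> v (c g * g) > \<gamma>"
  proof
    fix g assume gS: "g \<in> S"
    then obtain a where a: "g = Pmon a" "mon_val a \<ge> \<gamma>" using S(3) by blast
    then have "mon_val a > \<gamma>" using na \<gamma>_def by (metis order_le_imp_less_or_eq)
    then have vg: "v g > \<gamma>" using a v_Pmon by simp
    show "c g * g = 0 \<or> v (c g * g) > \<gamma>"
    proof (cases "c g = 0")
      case False
      have "v (c g) \<ge> 0" using v_loc[OF vd] S(4) gS False by blast
      then show ?thesis using v_mult[OF vd False] a Pmon_ne0[where 'a='k] vg by simp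
    qed simp
  qed
  then have "h = 0 \<or> v h > \<gamma>" using v_sum_gt[OF vd S(2)] S(1) by simp
  then show False using assms \<gamma>_def by simp
qed

end

theorem mainTheorem14:
  fixes v :: "'k::alg_closed_field poly poly fract \<Rightarrow> rat"
  assumes "is_bar_nu v" and "n \<ge> 1"
  shows "Mn v n = Useg v n \<union> (\<Union>j\<in>{n..}. (\<lambda>m. (bbeta j - of_nat n) + m) ` M0 v)"
proof
  have VD: "valuation_dominating v" by (rule vd[OF assms(1)])
  have X0: "emb (varX :: 'k poly poly) \<noteq> 0" by simp
  have vX: "v (emb varX) = 1" using v_P[OF assms(1), of 0] by (simp add: bbeta0)
  show "Mn v n \<subseteq> Useg v n \<union> (\<Union>j\<in>{n..}. (\<lambda>m. (bbeta j - of_nat n) + m) ` M0 v)"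
  proof
    fix x assume xM: "x \<in> Mn v n"
    then obtain f where f: "x = v f" "f \<in> Wn n" "f \<noteq> 0" unfolding Mn_def by blast
    obtain F where F: "f * emb varX ^ n = emb F" using Wn_poly[OF f(2)] by blast
    have F0: "emb F \<noteq> 0" using F f(3) X0 by (metis mult_eq_0_iff power_eq_0_iff)
    have "v (emb F) = v f + of_nat n"
      using F v_mult[OF VD f(3), of "emb varX ^ n"] v_pow[OF VD X0, of n] vX X0 by simp
    moreover obtain a where a: "v (emb F) = mon_val a" using val_mon[OF assms(1) emb_locA F0] by blast
    ultimately have xa: "x = mon_val a - of_nat n" using f(1) by simp
    show "x \<in> Useg v n \<union> (\<Union>j\<in>{n..}. (\<lambda>m. (bbeta j - of_nat n) + m) ` M0 v)"
    proof (cases "\<exists>i<length a. n \<le> i \<and> a ! i \<noteq> 0")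
      case True
      then obtain i where i: "i < length a" "n \<le> i" "a ! i \<ge> 1" by force
      have "x = (bbeta i - of_nat n) + mon_val (a[i := a ! i - 1])"
        using xa mon_val_dec[OF i(1) i(3)] by simp
      then show ?thesis using mon_val_M0[OF assms(1)] i(2) by blast
    next
      case False
      then have low: "\<forall>i<length a. n \<le> i \<longrightarrow> a ! i = 0" by auto
      define l where "l i = int (if i < length a then a ! i else 0) - (if i = 0 then int n else 0)" for i
      have pt: "of_int (l j) * bbeta j = of_nat (if j < length a then a ! j else 0) * bbeta j - (if j = 0 then of_nat n * bbeta j else 0)" for j
        by (simp add: l_def algebra_simps)
      have "(\<Sum>j<n. of_int (l j) * bbeta j)
          = (\<Sum>j<n. of_nat (if j < length a then a ! j else 0) * bbeta j) - (\<Sum>j<n. (if j = 0 then of_nat n * bbeta j else 0))"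
        by (simp only: pt sum_subtractf)
      also have "(\<Sum>j<n. (if j = 0 then of_nat n * bbeta j else 0)) = (of_nat n :: rat)"
        using assms(2) by (simp add: bbeta0)
      also have "(\<Sum>j<n. of_nat (if j < length a then a ! j else 0) * bbeta j) = mon_val a"
        using mon_val_low[OF low] by simp
      finally have "x = (\<Sum>j<n. of_int (l j) * bbeta j)" using xa by simp
      then have "x \<in> Useg v n" unfolding Useg_def using xM by blast
      then show ?thesis by blast
    qed
  qed
next
  have VD: "valuation_dominating v" by (rule vd[OF assms(1)])
  have X0: "emb (varX :: 'k poly poly) \<noteq> 0" by simp
  have vX: "v (emb varX) = 1" using v_P[OF assms(1), of 0] by (simp add: bbeta0)
  show "Useg v n \<union> (\<Union>j\<in>{n..}. (\<lambda>m. (bbeta j - of_nat n) + m) ` M0 v) \<subseteq> Mn v n"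
  proof
    fix x assume "x \<in> Useg v n \<union> (\<Union>j\<in>{n..}. (\<lambda>m. (bbeta j - of_nat n) + m) ` M0 v)"
    then show "x \<in> Mn v n"
    proof
      assume "x \<in> Useg v n" then show ?thesis unfolding Useg_def by blast
    next
      assume "x \<in> (\<Union>j\<in>{n..}. (\<lambda>m. (bbeta j - of_nat n) + m) ` M0 v)"
      then obtain j m where jm: "n \<le> j" "m \<in> M0 v" "x = bbeta j - of_nat n + m" by auto
      then obtain g where g: "m = v g" "g \<in> locA" "g \<noteq> 0" unfolding M0_def by blast
      then obtain a b where ab: "g = Fract a b" "at_origin b \<noteq> 0" unfolding locA_def by blast
      have b0: "b \<noteq> 0" using ab(2) by auto
      have a0: "a \<noteq> 0" using ab(1) g(3) by (auto simp: fract_collapse)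
      have "g = emb a * inverse (emb b)" using ab(1) b0 by (simp add: Fract_emb divide_inverse)
      then have vg: "v g = v (emb a)"
        using v_mult[OF VD, of "emb a" "inverse (emb b)"] v_inv[OF VD, of "emb b"] v_unit[OF VD ab(2)] a0 b0
        by simp
      have "inI (j + 0) (Pseq j * a)" by (rule inI_mult[OF inI_Pseq inI.I0])
      then have "inI n (Pseq j * a)" using inI_mono[of n "j - n"] jm(1) by simp
      then have fW: "emb (Pseq j * a) * inverse (emb varX) ^ n \<in> Wn n" by (rule inI_Wn)
      have P0: "emb (Pseq j :: 'k poly poly) \<noteq> 0" using Pseq_ne0 by simp
      have e0: "emb (Pseq j * a) \<noteq> 0" using a0 Pseq_ne0[where 'a='k] by simp
      have i0: "inverse (emb varX) ^ n \<noteq> 0" using X0 by simp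
      have "v (emb (Pseq j * a) * inverse (emb varX) ^ n) = bbeta j + v (emb a) - of_nat n"
        using v_mult[OF VD e0 i0] v_pow[OF VD, of "inverse (emb varX)" n] v_inv[OF VD X0] vX X0
          v_mult[OF VD P0, of "emb a"] a0 v_P[OF assms(1), of j] by (simp add: emb_mult)
      then have "x = v (emb (Pseq j * a) * inverse (emb varX) ^ n)" using jm(3) g(1) vg by simp
      then show ?thesis unfolding Mn_def using fW e0 i0 by force
    qed
  qed
qed

end
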